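(* For every $c>1$ there exist $k\in\mathbb{N}$, real numbers $1\le t_1<t_2<\dots<t_k<c$, and $k$ power functions $f_1,\dots,f_k$ (i.e. $f_i(b)=a_ib^{s_i}$ with constants $a_i\in\mathbb{R}$) whose orders $s_i$ satisfy $0\le s_i<c$, such that $$(b+w)^c-b^c-w^c\le\sum_{i=1}^k f_i(b)\,w^{t_i}\qquad\text{for all } b,w\ge0.$$ *)

theory Defs
  imports Complex_Main
begin

text \<open>Real power with the usual convention 0^0 = 1 (Isabelle's powr has 0 powr 0 = 0).\<close>
definition rpow :: "real \<Rightarrow> real \<Rightarrow> real" where
  "rpow x y = (if x = 0 then (if y = 0 then 1 else 0) else x powr y)"

definition power_fun :: "real \<Rightarrow> real \<Rightarrow> real \<Rightarrow> real" where
  "power_fun a s b = a * rpow b s"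

end

theory Submission
  imports Defs
begin

lemma rpow_nz: "y \<noteq> 0 \<Longrightarrow> rpow x y = x powr y"
  by (simp add: rpow_def)

lemma key:
  fixes b w c :: real
  assumes c: "c > 1" and b: "0 \<le> b" and bw: "b \<le> w"
  shows "(b + w) powr c - b powr c - w powr c \<le> c * 2 powr (c - 1) * b * w powr (c - 1)"
proof (cases "b = 0")
  case True
  then show ?thesis by simp
next
  case False
  then have bp: "b > 0" using b by simp
  then have wp: "w > 0" using bw by simp
  have der: "\<And>x. w \<le> x \<Longrightarrow> x \<le> b + w \<Longrightarrow>
      DERIV (\<lambda>z. z powr c) x :> c * x powr (c - 1)"
    using wp by (intro has_real_derivative_powr) auto
  obtain z where z: "w < z" "z < b + w"
    and eq: "(b + w) powr c - w powr c = (b + w - w) * (c * z powr (c - 1))"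
    using MVT2[of w "b + w" "\<lambda>z. z powr c" "\<lambda>x. c * x powr (c - 1)", OF _ der] bp by auto
  have "z powr (c - 1) \<le> (2 * w) powr (c - 1)"
    using z c wp bw by (intro powr_mono2) auto
  also have "\<dots> = 2 powr (c - 1) * w powr (c - 1)"
    using wp by (simp add: powr_mult)
  finally have zle: "z powr (c - 1) \<le> 2 powr (c - 1) * w powr (c - 1)" .
  have "(b + w) powr c - w powr c \<le> b * (c * (2 powr (c - 1) * w powr (c - 1)))"
  proof -
    have "c * z powr (c - 1) \<le> c * (2 powr (c - 1) * w powr (c - 1))"
      using zle c by (intro mult_left_mono) auto
    then show ?thesis unfolding eq using bp by (simp add: mult_left_mono)
  qed
  moreover have "b powr c \<ge> 0" by simp
  moreover have "b * (c * (2 powr (c - 1) * w powr (c - 1))) = c * 2 powr (c - 1) * b * w powr (c - 1)"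
    by (simp add: mult_ac)
  ultimately show ?thesis by linarith
qed

lemma key2:
  fixes b w c :: real
  assumes c: "c > 1" and b: "0 \<le> b" and w: "0 \<le> w"
  shows "(b + w) powr c - b powr c - w powr c \<le> c * 2 powr (c - 1) * b * w powr (c - 1)
       \<or> (b + w) powr c - b powr c - w powr c \<le> c * 2 powr (c - 1) * w * b powr (c - 1)"
proof (cases "b \<le> w")
  case True
  then show ?thesis using key[OF c b True] by simp
next
  case False
  then show ?thesis using key[OF c w, of b] by (simp add: add.commute)
qed

theorem lemmaC1:
  fixes c :: real
  assumes "c > 1"
  shows "\<exists>(k::nat) (t::nat \<Rightarrow> real) (a::nat \<Rightarrow> real) (s::nat \<Rightarrow> real).
           (\<forall>i j. 1 \<le> i \<longrightarrow> i < j \<longrightarrow> j \<le> k \<longrightarrow> t i < t j) \<and>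
           (\<forall>i\<in>{1..k}. 1 \<le> t i \<and> t i < c \<and> 0 \<le> s i \<and> s i < c) \<and>
           (\<forall>b w. 0 \<le> b \<longrightarrow> 0 \<le> w \<longrightarrow>
              rpow (b + w) c - rpow b c - rpow w c
                \<le> (\<Sum>i=1..k. power_fun (a i) (s i) b * rpow w (t i)))"
proof -
  define K where "K = c * 2 powr (c - 1)"
  have K0: "K \<ge> 0" using assms by (simp add: K_def)
  have c0: "c \<noteq> 0" "c - 1 \<noteq> 0" using assms by auto
  show ?thesis
  proof (cases "c \<le> 2")
    case True
    show ?thesis
    apply (rule exI[of _ "1::nat"])
    apply (rule exI[of _ "\<lambda>_. 1::real"])
    apply (rule exI[of _ "\<lambda>_. K"])
    apply (rule exI[of _ "\<lambda>_. c - 1"])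
    proof (intro conjI allI impI)
      show "\<forall>i\<in>{1..1}. 1 \<le> (1::real) \<and> 1 < c \<and> 0 \<le> c - 1 \<and> c - 1 < c" using assms by auto
    next
      fix i j :: nat assume "1 \<le> i" "i < j" "j \<le> 1" then show "(1::real) < 1" by simp
    next
      fix b w :: real assume b: "0 \<le> b" and w: "0 \<le> w"
      have goal: "(b + w) powr c - b powr c - w powr c \<le> K * b powr (c - 1) * w"
      proof (cases "b \<le> w")
        case False
        then show ?thesis using key[OF assms w, of b] by (simp add: add.commute K_def mult_ac)
      next
        case bw: True
        show ?thesis
        proof (cases "b = 0")
          case True then show ?thesis by simp
        next
          case False
          then have bp: "b > 0" using b by simp
          have "w powr (c - 2) \<le> b powr (c - 2)"
            using True bp bw by (intro powr_mono2') auto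
          then have "b * w * w powr (c - 2) \<le> b * w * b powr (c - 2)"
            using bp w by (intro mult_left_mono) auto
          moreover have "w * w powr (c - 2) = w powr (c - 1)"
          proof (cases "w = 0")
            case True then show ?thesis using c0 by simp
          next
            case False
            then have "w * w powr (c - 2) = w powr (1 + (c - 2))" using w
              unfolding powr_add by simp
            then show ?thesis by simp
          qed
          moreover have "b * b powr (c - 2) = b powr (c - 1)"
          proof -
            have "b * b powr (c - 2) = b powr (1 + (c - 2))" using bp
              unfolding powr_add by simp
            then show ?thesis by simp
          qed
          ultimately have "b * w powr (c - 1) \<le> b powr (c - 1) * w"
            by (metis mult.assoc mult.commute)
          then have "K * (b * w powr (c - 1)) \<le> K * (b powr (c - 1) * w)"
            using K0 by (rule mult_left_mono)
          then show ?thesis using key[OF assms b bw] by (simp add: K_def mult_ac)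
        qed
      qed
      then show "rpow (b + w) c - rpow b c - rpow w c
          \<le> (\<Sum>i=(1::nat)..1. power_fun K (c - 1) b * rpow w 1)"
        using c0 w by (simp add: rpow_nz power_fun_def mult_ac)
    qed
  next
    case False
    show ?thesis
    apply (rule exI[of _ "2::nat"])
    apply (rule exI[of _ "\<lambda>i. if i = 1 then 1 else c - 1"])
    apply (rule exI[of _ "\<lambda>_. K"])
    apply (rule exI[of _ "\<lambda>i. if i = 1 then c - 1 else 1"])
    proof (intro conjI allI impI)
      show "\<forall>i\<in>{1..2}. 1 \<le> (if i = 1 then 1 else c - 1) \<and> (if i = 1 then 1 else c - 1) < c
          \<and> 0 \<le> (if i = 1 then c - 1 else 1) \<and> (if i = 1 then c - 1 else (1::real)) < c"
        using assms False by auto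
    next
      fix i j :: nat assume "1 \<le> i" "i < j" "j \<le> 2"
      then show "(if i = 1 then 1 else c - 1) < (if j = 1 then 1 else c - 1)"
        using False by auto
    next
      fix b w :: real assume b: "0 \<le> b" and w: "0 \<le> w"
      have sum: "(\<Sum>i=(1::nat)..2. power_fun K (if i = 1 then c - 1 else 1) b * rpow w (if i = 1 then 1 else c - 1))
          = K * b powr (c - 1) * w + K * b * w powr (c - 1)"
        using c0 b w by (simp add: numeral_2_eq_2 rpow_nz power_fun_def)
      have "0 \<le> K * b powr (c - 1) * w" "0 \<le> K * b * w powr (c - 1)"
        using K0 b w by auto
      then have "(b + w) powr c - b powr c - w powr c \<le> K * b powr (c - 1) * w + K * b * w powr (c - 1)"
        using key2[OF assms b w] by (auto simp: K_def mult_ac)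
      then show "rpow (b + w) c - rpow b c - rpow w c
          \<le> (\<Sum>i=(1::nat)..2. power_fun K (if i = 1 then c - 1 else 1) b * rpow w (if i = 1 then 1 else c - 1))"
        using c0 sum by (simp add: rpow_nz)
    qed
  qed
qed

end
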